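(* Let $D_+, D_-$ be a pair of SBP operators of order $q\ge1$ on $[a,b]$ with associated data $H,S,\mathbf{p}_0,\mathbf{p}_n,\mathbf{x}$, and assume it is nullspace consistent, i.e. $\ker D_+=\operatorname{span}\{\mathbf{1}\}$. Let $\tilde D_+ = D_+ + H^{-1}\mathbf{p}_0\mathbf{p}_0^\top$ and let $(\lambda,\mathbf{w})$ be an eigenpair of $\tilde D_+$ (over $\mathbb{C}$) with $\operatorname{Re}(\lambda)=0$. Then $(\mathbf{x}^j)^\top H\mathbf{w} = 0$ for every $j=0,\dots,q$.
   Context: Let $[a,b]$ be an interval with $b>a$ and $n\ge 1$. For $\mathbf{x}\in\mathbb{R}^{n+1}$, $\mathbf{x}^j$ denotes elementwise exponentiation, with $\mathbf{x}^0=\mathbf{1}=(1,\dots,1)^\top$. Matrices $D_+, D_-\in\mathbb{R}^{(n+1)\times(n+1)}$ form a pair of SBP (summation-by-parts) operators of order $q\ge 1$ on $[a,b]$ if there exist matrices $H,S\in\mathbb{R}^{(n+1)\times(n+1)}$ and vectors $\mathbf{p}_0,\mathbf{p}_n,\mathbf{x}\in\mathbb{R}^{n+1}$ such that: (A) $D_\pm \mathbf{x}^j = j\mathbf{x}^{j-1}$, $\mathbf{p}_0^\top\mathbf{x}^j = a^j$, $\mathbf{p}_n^\top \mathbf{x}^j = b^j$ for $j=0,\dots,q$ (with $0\cdot\mathbf{x}^{-1}:=\mathbf{0}$); (B) $H=H^\top$ is positive definite; (C) $HD_+ + D_+^\top H = -\mathbf{p}_0\mathbf{p}_0^\top + \mathbf{p}_n\mathbf{p}_n^\top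 + S$ with $S=S^\top$ positive semidefinite; (D) $HD_+ + D_-^\top H = -\mathbf{p}_0\mathbf{p}_0^\top + \mathbf{p}_n\mathbf{p}_n^\top$; (E) $\mathbf{x}=(x_0,\dots,x_n)^\top$ with $x_i\ne x_j$ for $i\ne j$. *)

theory Defs
  imports "HOL-Analysis.Analysis"
begin

text \<open>Vectors in R^(n+1) are modelled as real^'n with CARD('n) = n+1.\<close>

definition epow :: "real^'n \<Rightarrow> nat \<Rightarrow> real^'n" where
  "epow x j = (\<chi> i. (x $ i) ^ j)"

definition outer :: "real^'n \<Rightarrow> real^'n \<Rightarrow> real^'n^'n" where
  "outer u v = (\<chi> i k. u $ i * v $ k)"

definition pos_def_mat :: "real^'n^'n \<Rightarrow> bool" where
  "pos_def_mat H \<longleftrightarrow> transpose H = H \<and> (\<forall>v. v \<noteq> 0 \<longrightarrow> v \<bullet> (H *v v) > 0)"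

definition psd_mat :: "real^'n^'n \<Rightarrow> bool" where
  "psd_mat S \<longleftrightarrow> transpose S = S \<and> (\<forall>v. v \<bullet> (S *v v) \<ge> 0)"

text \<open>SBP pair of order q on [a,b], conditions (A)-(E).\<close>
definition sbp_pair ::
  "real \<Rightarrow> real \<Rightarrow> nat \<Rightarrow> real^'n^'n \<Rightarrow> real^'n^'n \<Rightarrow> real^'n^'n \<Rightarrow> real^'n^'n
   \<Rightarrow> real^'n \<Rightarrow> real^'n \<Rightarrow> real^'n \<Rightarrow> bool" where
  "sbp_pair a b q Dp Dm H S p0 pn x \<longleftrightarrow>
     (\<forall>j\<le>q. Dp *v epow x j = of_nat j *\<^sub>R epow x (j - 1)
            \<and> Dm *v epow x j = of_nat j *\<^sub>R epow x (j - 1)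
            \<and> p0 \<bullet> epow x j = a ^ j \<and> pn \<bullet> epow x j = b ^ j)
   \<and> pos_def_mat H
   \<and> psd_mat S
   \<and> H ** Dp + transpose Dp ** H = - outer p0 p0 + outer pn pn + S
   \<and> H ** Dp + transpose Dm ** H = - outer p0 p0 + outer pn pn
   \<and> inj (\<lambda>i. x $ i)"

definition cmat :: "real^'n^'m \<Rightarrow> complex^'n^'m" where
  "cmat M = (\<chi> i k. complex_of_real (M $ i $ k))"

end

theory Submission
  imports Defs
begin

definition rev :: "complex^'n \<Rightarrow> real^'n" where "rev w = (\<chi> i. Re (w $ i))"
definition imv :: "complex^'n \<Rightarrow> real^'n" where "imv w = (\<chi> i. Im (w $ i))"

lemma cmat_mult_Re: "Re ((cmat A *v w) $ i) = (A *v rev w) $ i"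
  by (simp add: cmat_def matrix_vector_mult_def rev_def Re_sum)

lemma cmat_mult_Im: "Im ((cmat A *v w) $ i) = (A *v imv w) $ i"
  by (simp add: cmat_def matrix_vector_mult_def imv_def Im_sum)

lemma outer_mult: "outer p p *v z = (p \<bullet> z) *\<^sub>R p"
  by (simp add: vec_eq_iff outer_def matrix_vector_mult_def inner_vec_def sum_distrib_left
      sum_distrib_right mult_ac)

lemma sym_inner: assumes "transpose H = H"
  shows "(H *v z) \<bullet> y = z \<bullet> (H *v (y::real^'n))"
proof -
  have "H *v z = z v* H" by (metis assms transpose_matrix_vector)
  then show ?thesis by (simp add: dot_lmul_matrix)
qed

lemma transp_inner: "y \<bullet> (transpose A *v z) = (A *v y) \<bullet> (z::real^'n)"
  by (metis dot_lmul_matrix inner_commute transpose_matrix_vector)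

theorem lemma4:
  fixes a b :: real and q :: nat
    and Dp Dm H S :: "real^'n^'n" and p0 pn x :: "real^'n"
    and lam :: complex and w :: "complex^'n"
  assumes "CARD('n) \<ge> 2" and "b > a" and "q \<ge> 1"
    and "sbp_pair a b q Dp Dm H S p0 pn x"
    and "{v. Dp *v v = 0} = span {1 :: real^'n}"
    and "w \<noteq> 0"
    and "cmat (Dp + matrix_inv H ** outer p0 p0) *v w = lam *s w"
    and "Re lam = 0"
  shows "\<forall>j\<le>q. (\<Sum>i\<in>UNIV. complex_of_real (x $ i ^ j) * (cmat H *v w) $ i) = 0"
proof -
  define u where "u = rev w"
  define v where "v = imv w"
  define \<mu> where "\<mu> = Im lam"
  define M where "M = Dp + matrix_inv H ** outer p0 p0"
  note sbp = assms(4)[unfolded sbp_pair_def]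
  have Dpx: "\<And>j. j \<le> q \<Longrightarrow> Dp *v epow x j = of_nat j *\<^sub>R epow x (j - 1)"
   and Dmx: "\<And>j. j \<le> q \<Longrightarrow> Dm *v epow x j = of_nat j *\<^sub>R epow x (j - 1)"
   and p0x: "\<And>j. j \<le> q \<Longrightarrow> p0 \<bullet> epow x j = a ^ j"
   and pnx: "\<And>j. j \<le> q \<Longrightarrow> pn \<bullet> epow x j = b ^ j"
    using sbp by blast+
  have Hpd: "pos_def_mat H" and Spsd: "psd_mat S"
   and E1: "H ** Dp + transpose Dp ** H = - outer p0 p0 + outer pn pn + S"
   and E2: "H ** Dp + transpose Dm ** H = - outer p0 p0 + outer pn pn"
    using sbp by blast+
  have Hsym: "transpose H = H" using Hpd by (simp add: pos_def_mat_def)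
  have Ssym: "\<And>z. z \<bullet> (S *v z) \<ge> 0" using Spsd by (simp add: psd_mat_def)
  have Hinj: "inj ((*v) H)"
  proof (rule injI)
    fix y z :: "real^'n" assume "H *v y = H *v z"
    then have "H *v (y - z) = 0" by (simp add: matrix_vector_mult_diff_distrib)
    then show "y = z" using Hpd unfolding pos_def_mat_def
      by (metis inner_zero_right less_irrefl right_minus_eq)
  qed
  have "invertible H" using Hinj matrix_left_invertible_injective invertible_left_inverse by blast
  then have HHi: "H ** matrix_inv H = mat 1"
    unfolding invertible_def matrix_inv_def by (rule someI_ex[THEN conjunct1])
  have HHiv: "\<And>z. H *v (matrix_inv H *v z) = z"
    by (simp add: matrix_vector_mul_assoc HHi)
  have Mdef: "\<And>z. M *v z = Dp *v z + matrix_inv H *v ((p0 \<bullet> z) *\<^sub>R p0)"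
    by (simp add: M_def matrix_vector_mult_add_rdistrib outer_mult flip: matrix_vector_mul_assoc)
  have eig: "cmat M *v w = lam *s w" using assms(7) M_def by simp
  have Mu: "M *v u = (- \<mu>) *\<^sub>R v"
  proof -
    have "\<And>i. (M *v u) $ i = Re ((cmat M *v w) $ i)" by (simp add: cmat_mult_Re u_def)
    then show ?thesis using assms(8) by (simp add: eig vec_eq_iff v_def imv_def \<mu>_def)
  qed
  have Mv: "M *v v = \<mu> *\<^sub>R u"
  proof -
    have "\<And>i. (M *v v) $ i = Im ((cmat M *v w) $ i)" by (simp add: cmat_mult_Im v_def)
    then show ?thesis using assms(8) by (simp add: eig vec_eq_iff u_def rev_def \<mu>_def)
  qed
  have quad: "2 * (z \<bullet> (H *v (M *v z))) = (p0 \<bullet> z)^2 + (pn \<bullet> z)^2 + z \<bullet> (S *v z)" for z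
  proof -
    have a1: "z \<bullet> ((transpose Dp ** H) *v z) = z \<bullet> (H *v (Dp *v z))"
    proof -
      have "z \<bullet> ((transpose Dp ** H) *v z) = z \<bullet> (transpose Dp *v (H *v z))"
        by (simp only: matrix_vector_mul_assoc)
      also have "\<dots> = (Dp *v z) \<bullet> (H *v z)" by (rule transp_inner)
      also have "\<dots> = z \<bullet> (H *v (Dp *v z))"
        by (metis inner_commute sym_inner[OF Hsym])
      finally show ?thesis .
    qed
    have "z \<bullet> ((H ** Dp + transpose Dp ** H) *v z) = (pn \<bullet> z)^2 - (p0 \<bullet> z)^2 + z \<bullet> (S *v z)"
      unfolding E1 by (simp add: matrix_vector_mult_add_rdistrib outer_mult inner_add_right matrix_vector_mult_diff_rdistrib inner_diff_right power2_eq_square inner_commute)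
    then have "2 * (z \<bullet> (H *v (Dp *v z))) = (pn \<bullet> z)^2 - (p0 \<bullet> z)^2 + z \<bullet> (S *v z)"
      using a1 by (simp add: matrix_vector_mult_add_rdistrib inner_add_right matrix_vector_mul_assoc)
    then show ?thesis
      by (simp add: Mdef matrix_vector_right_distrib HHiv inner_add_right power2_eq_square inner_commute algebra_simps)
  qed
  have qu: "u \<bullet> (H *v (M *v u)) = - \<mu> * (u \<bullet> (H *v v))"
  proof -
    have "H *v ((- \<mu>) *\<^sub>R v) = (- \<mu>) *\<^sub>R (H *v v)" by (rule matrix_vector_mult_scaleR)
    then show ?thesis unfolding Mu by (simp only: inner_scaleR_right)
  qed
  have qv: "v \<bullet> (H *v (M *v v)) = \<mu> * (u \<bullet> (H *v v))"
  proof -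
    have "v \<bullet> (H *v u) = u \<bullet> (H *v v)" by (metis inner_commute sym_inner[OF Hsym])
    then show ?thesis unfolding Mv by (simp add: matrix_vector_mult_scaleR)
  qed
  have sum0: "((p0 \<bullet> u)^2 + (pn \<bullet> u)^2 + u \<bullet> (S *v u)) + ((p0 \<bullet> v)^2 + (pn \<bullet> v)^2 + v \<bullet> (S *v v)) = 0"
    using quad[of u] quad[of v] qu qv by linarith
  have p0u: "p0 \<bullet> u = 0" and p0v: "p0 \<bullet> v = 0" and pnu: "pn \<bullet> u = 0" and pnv: "pn \<bullet> v = 0"
  proof -
    have "(p0 \<bullet> u)^2 = 0 \<and> (pn \<bullet> u)^2 = 0 \<and> (p0 \<bullet> v)^2 = 0 \<and> (pn \<bullet> v)^2 = 0"
      using sum0 Ssym[of u] Ssym[of v] zero_le_power2[of "p0 \<bullet> u"] zero_le_power2[of "pn \<bullet> u"]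
        zero_le_power2[of "p0 \<bullet> v"] zero_le_power2[of "pn \<bullet> v"] by linarith
    then show "p0 \<bullet> u = 0" "p0 \<bullet> v = 0" "pn \<bullet> u = 0" "pn \<bullet> v = 0" by simp_all
  qed
  have Dpu: "Dp *v u = (- \<mu>) *\<^sub>R v" using Mu Mdef[of u] p0u by simp
  have Dpv: "Dp *v v = \<mu> *\<^sub>R u" using Mv Mdef[of v] p0v by simp
  have key: "y \<bullet> (H *v (Dp *v z)) = - ((Dm *v y) \<bullet> (H *v z))" if "p0 \<bullet> z = 0" "pn \<bullet> z = 0" for y z
  proof -
    have "y \<bullet> ((H ** Dp + transpose Dm ** H) *v z) = 0"
      unfolding E2 using that by (simp add: matrix_vector_mult_add_rdistrib outer_mult inner_add_right matrix_vector_mult_diff_rdistrib inner_diff_right inner_commute)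
    moreover have "y \<bullet> ((H *v z) v* Dm) = (Dm *v y) \<bullet> (H *v z)"
      using transp_inner[of y Dm "H *v z"] by simp
    ultimately show ?thesis
      by (simp add: matrix_vector_mult_add_rdistrib inner_add_right matrix_vector_mul_assoc[symmetric])
  qed
  define c where "c j = epow x j \<bullet> (H *v u)" for j
  define d where "d j = epow x j \<bullet> (H *v v)" for j
  have rec1: "\<mu> * d j = of_nat j * c (j - 1)" if "j \<le> q" for j
    using key[of u "epow x j", OF p0u pnu] Dmx[OF that] Dpu
      matrix_vector_mult_scaleR[of H "- \<mu>" v]
    by (simp add: c_def d_def matrix_vector_mult_scaleR)
  have rec2: "\<mu> * c j = - (of_nat j * d (j - 1))" if "j \<le> q" for j
    using key[of v "epow x j", OF p0v pnv] Dmx[OF that] Dpv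
    by (simp add: c_def d_def matrix_vector_mult_scaleR)
  have mu0: "\<mu> \<noteq> 0"
  proof
    assume "\<mu> = 0"
    then have "u \<in> span {1}" "v \<in> span {1}" using Dpu Dpv assms(5) by auto
    then obtain \<alpha> \<beta> where "u = \<alpha> *\<^sub>R 1" "v = \<beta> *\<^sub>R 1" by (auto simp: span_singleton)
    moreover have "epow x 0 = 1" by (simp add: epow_def vec_eq_iff)
    moreover have "p0 \<bullet> epow x 0 = 1" using p0x[of 0] by simp
    ultimately have "u = 0" "v = 0" using p0u p0v
      by (auto simp: inner_vec_def vec_eq_iff sum_distrib_left[symmetric] mult.commute)
    then have "w = 0"
      by (simp add: vec_eq_iff u_def v_def rev_def imv_def complex_eq_iff)
    then show False using assms(6) by simp
  qed
  have cd0: "j \<le> q \<longrightarrow> c j = 0 \<and> d j = 0" for j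
  proof (induction j)
    case 0 then show ?case using rec1[of 0] rec2[of 0] mu0 by simp
  next
    case (Suc j) then show ?case using rec1[of "Suc j"] rec2[of "Suc j"] mu0 by simp
  qed
  show ?thesis
  proof (intro allI impI)
    fix j assume j: "j \<le> q"
    have "Re (\<Sum>i\<in>UNIV. complex_of_real (x $ i ^ j) * (cmat H *v w) $ i) = c j"
      by (simp add: Re_sum cmat_mult_Re c_def epow_def inner_vec_def u_def mult.commute)
    moreover have "Im (\<Sum>i\<in>UNIV. complex_of_real (x $ i ^ j) * (cmat H *v w) $ i) = d j"
      by (simp add: Im_sum cmat_mult_Im d_def epow_def inner_vec_def v_def mult.commute)
    ultimately show "(\<Sum>i\<in>UNIV. complex_of_real (x $ i ^ j) * (cmat H *v w) $ i) = 0"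
      using cd0[of j] j by (simp add: complex_eq_iff)
  qed
qed

end
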